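(* Let $A,B:\mathbb{N}\to\mathbb{R}$ be functions with $\sum_{m\mid n} A(m) = B(n)$ for all $n\in\mathbb{N}$, and let $r,s$ be reals with $s\le\min\{0,r\}$. Then for every $n\in\mathbb{N}$: (i) $\sum_{m\mid n} \frac{m^s}{\varphi(m)^r} A(m) = \sum_{k\mid n} g^{r,s}_{k,n/k} B(k)$. (ii) If $\alpha,\beta:\mathbb{N}\to\mathbb{R}_{>0}$ satisfy $\beta(N)=\sum_{m\mid N}\alpha(m)$ for all $N\in\mathbb{N}$, and $B(k)\ge\beta(k)$ for all positive divisors $k$ of $n$, then $\sum_{m\mid n} \frac{m^s}{\varphi(m)^r}A(m) \ge \sum_{m\mid n}\frac{m^s}{\varphi(m)^r}\alpha(m)$, with equality if and only if $B(k)=\beta(k)$ for every positive divisor $k$ of $n$ such that $g^{r,s}_{k,n/k}\ne 0$.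
   Context: $\mu$ is the Möbius function, $\varphi$ is Euler's totient function, and for positive integers $m,j$, $g^{r,s}_{m,j} := \sum_{i\mid j} \frac{\mu(i)\,(mi)^s}{\varphi(mi)^r}$. $\mathbb{N}=\{1,2,3,\dots\}$. *)

theory Defs
  imports "HOL-Number_Theory.Number_Theory" "HOL-Computational_Algebra.Squarefree"
begin

definition moebius_mu :: "nat \<Rightarrow> real" where
  "moebius_mu n = (if n = 0 then 0 else if squarefree n then (-1) ^ card (prime_factors n) else 0)"

definition g_fun :: "real \<Rightarrow> real \<Rightarrow> nat \<Rightarrow> nat \<Rightarrow> real" where
  "g_fun r s m j = (\<Sum>i | i dvd j. moebius_mu i * real (m * i) powr s / real (totient (m * i)) powr r)"

end

theory Submission
  imports Defs
begin


lemma mu_1[simp]: "moebius_mu 1 = 1" by (simp add: moebius_mu_def)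

lemma mu_p_dvd: assumes "prime p" "p dvd i" shows "moebius_mu (p*i) = 0"
proof -
  have "p^2 dvd p*i" using assms by (auto simp: power2_eq_square)
  hence "\<not> squarefree (p*i)" using assms by (meson not_prime_unit not_squarefreeI)
  thus ?thesis by (simp add: moebius_mu_def)
qed

lemma mu_p_ndvd: assumes "prime p" "\<not> p dvd i" "i > 0" shows "moebius_mu (p*i) = - moebius_mu i"
proof -
  have cop: "coprime p i" using assms by (simp add: prime_imp_coprime)
  have sq: "squarefree (p*i) \<longleftrightarrow> squarefree i"
    using cop assms squarefree_mult_coprime[of p i] squarefree_multD squarefree_prime by blast
  have pf: "prime_factors (p*i) = insert p (prime_factors i)"
    using assms prime_factors_product[of p i] by (auto simp: prime_prime_factors)
  have "p \<notin> prime_factors i" using assms by auto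
  hence "card (prime_factors (p*i)) = Suc (card (prime_factors i))" using pf by simp
  thus ?thesis using sq assms by (auto simp: moebius_mu_def)
qed

lemma dvd_pow_ndvd: assumes "prime (p::nat)" "\<not> p dvd j"
  shows "(i dvd p^b*j \<and> \<not> p dvd i) \<longleftrightarrow> i dvd j"
proof
  assume h: "i dvd p^b*j \<and> \<not> p dvd i"
  hence "coprime p i" using assms by (simp add: prime_imp_coprime)
  hence "coprime i (p^b)" by (simp add: coprime_commute)
  thus "i dvd j" using h by (simp add: coprime_dvd_mult_right_iff)
next
  assume "i dvd j" thus "i dvd p^b*j \<and> \<not> p dvd i" using assms dvd_trans by auto
qed

lemma L: assumes p: "prime (p::nat)" and nj: "\<not> p dvd j" and j: "j > 0" and a: "a > 0"
  shows "(\<Sum>i | i dvd p^a*j. moebius_mu i * F i)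
       = (\<Sum>i | i dvd j. moebius_mu i * F i) - (\<Sum>i | i dvd j. moebius_mu i * F (p*i))"
proof -
  let ?n = "p^a*j"
  have n0: "?n > 0" using p j by (simp add: prime_gt_0_nat)
  have fin: "finite {i. i dvd ?n}" using n0 by simp
  have U: "{i. i dvd ?n} = {i. i dvd ?n \<and> \<not> p dvd i} \<union> {i. i dvd ?n \<and> p dvd i}" by blast
  have f1: "finite {i. i dvd ?n \<and> \<not> p dvd i}" by (rule finite_subset[OF _ fin]) blast
  have f2: "finite {i. i dvd ?n \<and> p dvd i}" by (rule finite_subset[OF _ fin]) blast
  have s1: "(\<Sum>i | i dvd ?n. moebius_mu i * F i)
     = (\<Sum>i | i dvd ?n \<and> \<not> p dvd i. moebius_mu i * F i) + (\<Sum>i | i dvd ?n \<and> p dvd i. moebius_mu i * F i)"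
    unfolding U by (rule sum.union_disjoint[OF f1 f2]) blast
  have e1: "{i. i dvd ?n \<and> \<not> p dvd i} = {i. i dvd j}" using dvd_pow_ndvd[OF p nj] by auto
  have e2: "{i. i dvd ?n \<and> p dvd i} = (\<lambda>i. p*i) ` {i. i dvd p^(a-1)*j}"
  proof -
    have e: "?n = p * (p^(a-1)*j)" using a by (cases a) auto
    show ?thesis unfolding e
    proof (intro equalityI subsetI)
      fix x assume "x \<in> {i. i dvd p * (p^(a-1)*j) \<and> p dvd i}"
      hence h: "x dvd p * (p^(a-1)*j)" "p dvd x" by auto
      obtain k where k0: "x = p*k" using h(2) by (rule dvdE)
      have k: "x = p*k" "p*k dvd p * (p^(a-1)*j)" using h(1) k0 by auto
      hence "k dvd p^(a-1)*j" using p by (simp add: prime_gt_0_nat)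
      thus "x \<in> (\<lambda>i. p*i) ` {i. i dvd p^(a-1)*j}" using k by auto
    qed auto
  qed
  have s2: "(\<Sum>i \<in> (\<lambda>i. p*i) ` {i. i dvd p^(a-1)*j}. moebius_mu i * F i)
     = (\<Sum>i | i dvd p^(a-1)*j. moebius_mu (p*i) * F (p*i))"
  proof -
    have "inj_on (\<lambda>i. p*i) {i. i dvd p^(a-1)*j}" using p by (simp add: inj_on_def prime_gt_0_nat)
    from sum.reindex[OF this, of "\<lambda>i. moebius_mu i * F i"] show ?thesis by (simp add: o_def)
  qed
  have s3: "(\<Sum>i | i dvd p^(a-1)*j. moebius_mu (p*i) * F (p*i)) = (\<Sum>i | i dvd p^(a-1)*j \<and> \<not> p dvd i. moebius_mu (p*i) * F (p*i))"
  proof (rule sum.mono_neutral_right)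
    show "finite {i. i dvd p^(a-1)*j}" using p j by (simp add: prime_gt_0_nat)
    show "{i. i dvd p^(a-1)*j \<and> \<not> p dvd i} \<subseteq> {i. i dvd p^(a-1)*j}" by blast
    show "\<forall>i\<in>{i. i dvd p^(a-1)*j} - {i. i dvd p^(a-1)*j \<and> \<not> p dvd i}. moebius_mu (p*i) * F (p*i) = 0"
      using mu_p_dvd[OF p] by simp
  qed
  have e3: "{i. i dvd p^(a-1)*j \<and> \<not> p dvd i} = {i. i dvd j}" using dvd_pow_ndvd[OF p nj] by auto
  have s4: "(\<Sum>i | i dvd j. moebius_mu (p*i) * F (p*i)) = - (\<Sum>i | i dvd j. moebius_mu i * F (p*i))"
  proof (subst sum_negf[symmetric], rule sum.cong)
    fix x assume "x \<in> {i. i dvd j}"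
    hence x: "x dvd j" by simp
    have "\<not> p dvd x" using x nj dvd_trans by blast
    moreover have "x > 0" using x j dvd_pos_nat by blast
    ultimately show "moebius_mu (p * x) * F (p * x) = - (moebius_mu x * F (p * x))"
      using mu_p_ndvd[OF p] by simp
  qed simp
  show ?thesis using s1 s2 s3 s4 unfolding e1 e2 e3 by linarith
qed


lemma mu_sum: "n > 0 \<Longrightarrow> (\<Sum>i | i dvd n. moebius_mu i) = (if n = 1 then 1 else 0)"
proof (cases "n = 1")
  case True thus ?thesis by (simp add: moebius_mu_def)
next
  case False
  assume n0: "n > 0"
  obtain p where p: "prime p" "p dvd n" using prime_factor_nat[OF False] by blast
  obtain j where j: "n = p ^ multiplicity p n * j" "\<not> p dvd j"
  proof (rule multiplicity_decompose')
    show "n \<noteq> 0" using n0 by simp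
    show "\<not> is_unit p" using prime_gt_1_nat[OF p(1)] by simp
  qed
  define a where "a = multiplicity p n"
  have a: "a > 0" using p n0 by (simp add: prime_multiplicity_gt_zero_iff a_def)
  have nj: "n = p^a * j" using j(1) a_def by simp
  have j0: "j > 0" using nj n0 by (cases j) auto
  have "(\<Sum>i | i dvd n. moebius_mu i) = (\<Sum>i | i dvd p^a*j. moebius_mu i * 1)" by (simp add: nj)
  also have "\<dots> = 0" using L[OF p(1) j(2) j0 a, of "\<lambda>_. 1"] by simp
  finally show ?thesis using False by simp
qed

lemma D:
  fixes H :: "nat \<Rightarrow> nat \<Rightarrow> real"
  assumes n: "n > 0"
  shows "(\<Sum>k | k dvd n. \<Sum>i | i dvd n div k. H k i) = (\<Sum>m | m dvd n. \<Sum>k | k dvd m. H k (m div k))"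
proof -
  let ?S = "SIGMA k:{k. k dvd n}. {i. i dvd n div k}"
  let ?T = "SIGMA m:{m. m dvd n}. {k. k dvd m}"
  have fS: "finite {k. k dvd n}" using n by simp
  have "(\<Sum>k | k dvd n. \<Sum>i | i dvd n div k. H k i) = (\<Sum>(k,i)\<in>?S. H k i)"
  proof (rule sum.Sigma[OF fS])
    show "\<forall>k\<in>{k. k dvd n}. finite {i. i dvd n div k}"
    proof
      fix k assume "k \<in> {k. k dvd n}"
      hence "n div k > 0" using n by (auto elim!: dvdE)
      thus "finite {i. i dvd n div k}" by simp
    qed
  qed
  also have "\<dots> = (\<Sum>(m,k)\<in>?T. H k (m div k))"
  proof (rule sum.reindex_bij_witness[of _ "\<lambda>(m,k). (k, m div k)" "\<lambda>(k,i). (k*i, k)"])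
    fix a assume "a \<in> ?S"
    then obtain k i where a: "a = (k,i)" "k dvd n" "i dvd n div k" by auto
    have k0: "k > 0" using a n by (auto intro: dvd_pos_nat)
    show "(case case a of (k, i) \<Rightarrow> (k * i, k) of (m, k) \<Rightarrow> (k, m div k)) = a" using a k0 by simp
    show "(case a of (k, i) \<Rightarrow> (k * i, k)) \<in> ?T"
    proof -
      obtain t where t: "n div k = i * t" using a(3) by (rule dvdE)
      have "n = k * (n div k)" using a(2) by simp
      hence "n = (k*i)*t" using t by (simp add: mult.assoc)
      hence "k*i dvd n" by (rule dvdI)
      thus ?thesis using a by auto
    qed
    show "(case case a of (k, i) \<Rightarrow> (k * i, k) of (m, k) \<Rightarrow> H k (m div k)) = (case a of (k, i) \<Rightarrow> H k i)"
      using a k0 by simp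
  next
    fix b assume "b \<in> ?T"
    then obtain m k where b: "b = (m,k)" "m dvd n" "k dvd m" by auto
    obtain t where t: "m = k*t" using b(3) by (rule dvdE)
    obtain u where u: "n = m*u" using b(2) by (rule dvdE)
    have k0: "k > 0" using n u t by (cases k) auto
    show "(case case b of (m, k) \<Rightarrow> (k, m div k) of (k, i) \<Rightarrow> (k * i, k)) = b" using b t k0 by simp
    have "n div k = t*u" using u t k0 by (simp add: mult.assoc)
    hence "m div k dvd n div k" using t k0 by simp
    moreover have "k dvd n" using b dvd_trans by blast
    ultimately show "(case b of (m, k) \<Rightarrow> (k, m div k)) \<in> ?S" using b by simp
  qed
  also have "\<dots> = (\<Sum>m | m dvd n. \<Sum>k | k dvd m. H k (m div k))"
  proof (rule sum.Sigma[OF fS, symmetric])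
    show "\<forall>m\<in>{m. m dvd n}. finite {k. k dvd m}" using n by (auto intro: dvd_pos_nat)
  qed
  finally show ?thesis .
qed

lemma mu_sum_rev: "q > 0 \<Longrightarrow> (\<Sum>t | t dvd q. moebius_mu (q div t)) = (if q = 1 then 1 else 0)"
proof -
  assume q: "q > 0"
  have "(\<Sum>t | t dvd q. moebius_mu (q div t)) = (\<Sum>t | t dvd q. moebius_mu t)"
    by (rule sum.reindex_bij_witness[of _ "(div) q" "(div) q"]) (use q in \<open>auto elim: dvdE\<close>)
  thus ?thesis using mu_sum[OF q] by simp
qed

lemma MI:
  fixes A B :: "nat \<Rightarrow> real"
  assumes hAB: "\<And>n. n > 0 \<Longrightarrow> (\<Sum>m | m dvd n. A m) = B n" and m: "m > 0"
  shows "A m = (\<Sum>k | k dvd m. moebius_mu (m div k) * B k)"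
proof -
  have "(\<Sum>k | k dvd m. moebius_mu (m div k) * B k) = (\<Sum>k | k dvd m. \<Sum>d | d dvd k. moebius_mu (m div (d * (k div d))) * A d)"
  proof (rule sum.cong[OF refl])
    fix k assume "k \<in> {k. k dvd m}"
    hence k0: "k > 0" using m by (auto intro: dvd_pos_nat)
    have "moebius_mu (m div k) * B k = (\<Sum>d | d dvd k. moebius_mu (m div k) * A d)"
      unfolding hAB[OF k0, symmetric] by (rule sum_distrib_left)
    also have "\<dots> = (\<Sum>d | d dvd k. moebius_mu (m div (d * (k div d))) * A d)"
      by (rule sum.cong) auto
    finally show "moebius_mu (m div k) * B k = (\<Sum>d | d dvd k. moebius_mu (m div (d * (k div d))) * A d)" .
  qed
  also have "\<dots> = (\<Sum>d | d dvd m. \<Sum>t | t dvd m div d. moebius_mu (m div (d * t)) * A d)"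
    using D[OF m, of "\<lambda>d t. moebius_mu (m div (d * t)) * A d"] by simp
  also have "\<dots> = (\<Sum>d | d dvd m. A d * (if d = m then 1 else 0))"
  proof (rule sum.cong[OF refl])
    fix d assume "d \<in> {d. d dvd m}"
    hence d: "d dvd m" by simp
    hence q: "m div d > 0" using m by (auto elim: dvdE)
    have "(\<Sum>t | t dvd m div d. moebius_mu (m div (d * t)) * A d)
        = A d * (\<Sum>t | t dvd m div d. moebius_mu (m div d div t))"
      unfolding sum_distrib_left div_mult2_eq by (simp add: mult.commute)
    also have "\<dots> = A d * (if d = m then 1 else 0)"
      using mu_sum_rev[OF q] d m by (auto elim!: dvdE)
    finally show "(\<Sum>t | t dvd m div d. moebius_mu (m div (d * t)) * A d) = A d * (if d = m then 1 else 0)" .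
  qed
  also have "\<dots> = A m" using m by (simp add: if_distrib cong: if_cong)
  finally show ?thesis by simp
qed

lemma part1:
  fixes A B :: "nat \<Rightarrow> real"
  assumes hAB: "\<And>n. n > 0 \<Longrightarrow> (\<Sum>m | m dvd n. A m) = B n" and n: "n > 0"
  shows "(\<Sum>m | m dvd n. real m powr s / real (totient m) powr r * A m)
       = (\<Sum>k | k dvd n. g_fun r s k (n div k) * B k)"
proof -
  define H where "H = (\<lambda>k i. moebius_mu i * (real (k*i) powr s / real (totient (k*i)) powr r) * B k)"
  have "(\<Sum>m | m dvd n. real m powr s / real (totient m) powr r * A m)
      = (\<Sum>m | m dvd n. \<Sum>k | k dvd m. H k (m div k))"
  proof (rule sum.cong[OF refl])
    fix m assume "m \<in> {m. m dvd n}"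
    hence m0: "m > 0" using n by (auto intro: dvd_pos_nat)
    have "real m powr s / real (totient m) powr r * A m
       = (\<Sum>k | k dvd m. real m powr s / real (totient m) powr r * (moebius_mu (m div k) * B k))"
    proof -
      have MIm: "A m = (\<Sum>k | k dvd m. moebius_mu (m div k) * B k)"
        by (rule MI) (use hAB m0 in auto)
      show ?thesis by (simp only: MIm sum_distrib_left)
    qed
    also have "\<dots> = (\<Sum>k | k dvd m. H k (m div k))"
      by (rule sum.cong[OF refl]) (auto simp: H_def)
    finally show "real m powr s / real (totient m) powr r * A m = (\<Sum>k | k dvd m. H k (m div k))" .
  qed
  also have "\<dots> = (\<Sum>k | k dvd n. \<Sum>i | i dvd n div k. H k i)" by (rule D[OF n, symmetric])
  also have "\<dots> = (\<Sum>k | k dvd n. g_fun r s k (n div k) * B k)"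
    unfolding g_fun_def H_def sum_distrib_right by simp
  finally show ?thesis .
qed

lemma totient_mult_prime_dvd:
  assumes p: "prime p" and d: "p dvd x" shows "totient (p*x) = p * totient x"
proof -
  have g: "gcd p x = p" using d by (simp add: gcd_nat.absorb1)
  have t: "totient p = p - 1" using p by (rule totient_prime)
  have p1: "p - 1 > 0" using prime_gt_1_nat[OF p] by simp
  have "totient (p*x) = (p - 1) * totient x * p div (p - 1)" using totient_mult[of p x] g t by simp
  also have "\<dots> = p * totient x" using p1 by simp
  finally show ?thesis .
qed

lemma ratio:
  fixes r s :: real and k :: nat
  assumes p: "prime p" and x0: "x > 0" and nd: "\<not> p dvd x"
  defines "c \<equiv> (if p dvd k then real p powr s / real p powr r else real p powr s / real (p - 1) powr r)"
  shows "real (k*(p*x)) powr s / real (totient (k*(p*x))) powr r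
       = c * (real (k*x) powr s / real (totient (k*x)) powr r)"
proof (cases "p dvd k")
  case True
  hence "p dvd k*x" by simp
  hence t0: "totient (p*(k*x)) = p * totient (k*x)" by (rule totient_mult_prime_dvd[OF p])
  have eq: "k*(p*x) = p*(k*x)" by (simp add: mult.left_commute)
  have t: "totient (k*(p*x)) = p * totient (k*x)" by (simp only: eq t0)
  have e: "real (k*(p*x)) = real p * real (k*x)" by simp
  show ?thesis unfolding t e c_def using True by (simp add: powr_mult)
next
  case False
  hence "\<not> p dvd k*x" using nd p by (simp add: prime_dvd_mult_iff)
  hence "coprime p (k*x)" using p prime_imp_coprime by blast
  hence t: "totient (k*(p*x)) = (p - 1) * totient (k*x)"
    using totient_mult_coprime totient_prime[OF p] by (metis mult.left_commute)
  have e: "real (k*(p*x)) = real p * real (k*x)" by simp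
  have e2: "real ((p - 1) * totient (k*x)) = real (p - 1) * real (totient (k*x))" by simp
  show ?thesis unfolding t e e2 c_def using False by (simp add: powr_mult)
qed

lemma c_le1:
  fixes r s :: real
  assumes p: "prime p" and hs: "s \<le> min 0 r"
  shows "(if p dvd k then real p powr s / real p powr r else real p powr s / real (p - 1) powr r) \<le> 1"
proof -
  have p2: "real p \<ge> 2" using prime_ge_2_nat[OF p] by simp
  have pm1: "real (p - 1) \<ge> 1" using prime_ge_2_nat[OF p] by simp
  have A: "real p powr s / real p powr r \<le> 1"
  proof -
    have "real p powr s \<le> real p powr r" using hs p2 by (intro powr_mono) auto
    moreover have "real p powr r > 0" using p2 by simp
    ultimately show ?thesis by simp
  qed
  have B: "real p powr s / real (p - 1) powr r \<le> 1"
  proof -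
    have pos: "real (p - 1) powr r > 0" using pm1 by simp
    have "real p powr s \<le> real (p - 1) powr r"
    proof (cases "r \<ge> 0")
      case True
      have "real p powr s \<le> real p powr 0" using hs p2 by (intro powr_mono) auto
      also have "\<dots> = 1" using p2 by simp
      also have "1 = real (p-1) powr 0" using pm1 by simp
      also have "\<dots> \<le> real (p-1) powr r" using True pm1 by (intro powr_mono) auto
      finally show ?thesis .
    next
      case False
      have "real p powr s \<le> real p powr r" using hs p2 by (intro powr_mono) auto
      also have "\<dots> \<le> real (p-1) powr r" using False pm1 by (intro powr_mono2') auto
      finally show ?thesis .
    qed
    thus ?thesis using pos by simp
  qed
  show ?thesis using A B by simp
qed

lemma g_rec:
  fixes r s :: real
  assumes p: "prime p" and nj: "\<not> p dvd j" and j: "j > 0" and a: "a > 0"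
  shows "g_fun r s k (p^a*j) = (1 - (if p dvd k then real p powr s / real p powr r else real p powr s / real (p - 1) powr r)) * g_fun r s k j"
proof -
  let ?c = "(if p dvd k then real p powr s / real p powr r else real p powr s / real (p - 1) powr r)"
  let ?F = "\<lambda>i. real (k*i) powr s / real (totient (k*i)) powr r"
  have gd: "g_fun r s k m = (\<Sum>i | i dvd m. moebius_mu i * ?F i)" for m
    unfolding g_fun_def by simp
  have "(\<Sum>i | i dvd j. moebius_mu i * ?F (p*i)) = (\<Sum>i | i dvd j. ?c * (moebius_mu i * ?F i))"
  proof (rule sum.cong[OF refl])
    fix i assume "i \<in> {i. i dvd j}"
    hence i: "i dvd j" by simp
    have "\<not> p dvd i" using i nj dvd_trans by blast
    moreover have "i > 0" using i j dvd_pos_nat by blast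
    ultimately show "moebius_mu i * ?F (p*i) = ?c * (moebius_mu i * ?F i)"
      using ratio[OF p, where x=i and k=k and r=r and s=s] by simp
  qed
  also have "\<dots> = ?c * g_fun r s k j" unfolding gd by (simp add: sum_distrib_left)
  finally have "(\<Sum>i | i dvd j. moebius_mu i * ?F (p*i)) = ?c * g_fun r s k j" .
  moreover have "g_fun r s k (p^a*j) = g_fun r s k j - (\<Sum>i | i dvd j. moebius_mu i * ?F (p*i))"
    unfolding gd by (rule L[OF p nj j a])
  ultimately show ?thesis by (simp add: algebra_simps)
qed

lemma g_nonneg:
  fixes r s :: real
  assumes hs: "s \<le> min 0 r"
  shows "j > 0 \<Longrightarrow> g_fun r s k j \<ge> 0"
proof (induction j rule: less_induct)
  case (less n)
  show ?case
  proof (cases "n = 1")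
    case True
    have "{i. i dvd (1::nat)} = {1}" by auto
    thus ?thesis using True by (simp add: g_fun_def moebius_mu_def)
  next
    case False
    have n0: "n > 0" using less.prems .
    obtain p where p: "prime p" "p dvd n" using prime_factor_nat[OF False] by blast
    obtain j where j: "n = p ^ multiplicity p n * j" "\<not> p dvd j"
    proof (rule multiplicity_decompose')
      show "n \<noteq> 0" using n0 by simp
      show "\<not> is_unit p" using prime_gt_1_nat[OF p(1)] by simp
    qed
    define a where "a = multiplicity p n"
    have a: "a > 0" using p n0 by (simp add: prime_multiplicity_gt_zero_iff a_def)
    have nj: "n = p^a * j" using j(1) a_def by simp
    have j0: "j > 0" using nj n0 by (cases j) auto
    have "p^a \<ge> p" using a prime_gt_0_nat[OF p(1)] by (simp add: self_le_power)
    hence "p^a > 1" using prime_gt_1_nat[OF p(1)] by linarith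
    hence "j < n" unfolding nj using j0 by simp
    hence ih: "g_fun r s k j \<ge> 0" using less.IH j0 by blast
    have "g_fun r s k n = (1 - (if p dvd k then real p powr s / real p powr r else real p powr s / real (p - 1) powr r)) * g_fun r s k j"
      unfolding nj by (rule g_rec[OF p(1) j(2) j0 a])
    moreover have "(if p dvd k then real p powr s / real p powr r else real p powr s / real (p - 1) powr r) \<le> 1"
      by (rule c_le1[OF p(1) hs])
    ultimately show ?thesis using ih by simp
  qed
qed


theorem lemma2p2:
  fixes A B :: "nat \<Rightarrow> real" and r s :: real
  assumes hAB: "\<And>n. n > 0 \<Longrightarrow> (\<Sum>m | m dvd n. A m) = B n"
    and hs: "s \<le> min 0 r"
  shows "\<forall>n>0.
    (\<Sum>m | m dvd n. real m powr s / real (totient m) powr r * A m)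
       = (\<Sum>k | k dvd n. g_fun r s k (n div k) * B k)
    \<and> (\<forall>\<alpha> \<beta> :: nat \<Rightarrow> real.
         (\<forall>N>0. \<alpha> N > 0 \<and> \<beta> N > 0) \<longrightarrow>
         (\<forall>N>0. \<beta> N = (\<Sum>m | m dvd N. \<alpha> m)) \<longrightarrow>
         (\<forall>k. k dvd n \<longrightarrow> B k \<ge> \<beta> k) \<longrightarrow>
         ((\<Sum>m | m dvd n. real m powr s / real (totient m) powr r * A m)
            \<ge> (\<Sum>m | m dvd n. real m powr s / real (totient m) powr r * \<alpha> m)
          \<and> ((\<Sum>m | m dvd n. real m powr s / real (totient m) powr r * A m)
               = (\<Sum>m | m dvd n. real m powr s / real (totient m) powr r * \<alpha> m)
             \<longleftrightarrow> (\<forall>k. k dvd n \<and> g_fun r s k (n div k) \<noteq> 0 \<longrightarrow> B k = \<beta> k))))"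
proof (intro allI impI conjI)
  fix n :: nat assume n: "n > 0"
  show P1: "(\<Sum>m | m dvd n. real m powr s / real (totient m) powr r * A m)
       = (\<Sum>k | k dvd n. g_fun r s k (n div k) * B k)"
    by (rule part1) (use hAB n in auto)
  fix \<alpha> \<beta> :: "nat \<Rightarrow> real"
  assume pos: "\<forall>N>0. \<alpha> N > 0 \<and> \<beta> N > 0"
    and hab: "\<forall>N>0. \<beta> N = (\<Sum>m | m dvd N. \<alpha> m)"
    and hB: "\<forall>k. k dvd n \<longrightarrow> B k \<ge> \<beta> k"
  have P2: "(\<Sum>m | m dvd n. real m powr s / real (totient m) powr r * \<alpha> m)
       = (\<Sum>k | k dvd n. g_fun r s k (n div k) * \<beta> k)"
    by (rule part1) (use hab n in auto)
  let ?T = "\<lambda>k. g_fun r s k (n div k) * (B k - \<beta> k)"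
  have diff: "(\<Sum>m | m dvd n. real m powr s / real (totient m) powr r * A m)
      - (\<Sum>m | m dvd n. real m powr s / real (totient m) powr r * \<alpha> m) = (\<Sum>k | k dvd n. ?T k)"
    unfolding P1 P2 sum_subtractf[symmetric] by (simp add: algebra_simps)
  have Tnn: "\<forall>k\<in>{k. k dvd n}. ?T k \<ge> 0"
  proof
    fix k assume "k \<in> {k. k dvd n}"
    hence k: "k dvd n" by simp
    hence "n div k > 0" using n by (auto elim: dvdE)
    hence "g_fun r s k (n div k) \<ge> 0" by (rule g_nonneg[OF hs])
    moreover have "B k - \<beta> k \<ge> 0" using hB k by simp
    ultimately show "?T k \<ge> 0" by simp
  qed
  have fin: "finite {k. k dvd n}" using n by simp
  have S0: "(\<Sum>k | k dvd n. ?T k) \<ge> 0" by (rule sum_nonneg, rule bspec[OF Tnn])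
  show "(\<Sum>m | m dvd n. real m powr s / real (totient m) powr r * A m)
            \<ge> (\<Sum>m | m dvd n. real m powr s / real (totient m) powr r * \<alpha> m)"
    using diff S0 by linarith
  have "(\<Sum>k | k dvd n. ?T k) = 0 \<longleftrightarrow> (\<forall>k\<in>{k. k dvd n}. ?T k = 0)"
    by (rule sum_nonneg_eq_0_iff[OF fin]) (rule bspec[OF Tnn])
  also have "\<dots> \<longleftrightarrow> (\<forall>k. k dvd n \<and> g_fun r s k (n div k) \<noteq> 0 \<longrightarrow> B k = \<beta> k)"
    unfolding Ball_def mem_Collect_eq mult_eq_0_iff right_minus_eq by blast
  finally have fin2: "(\<Sum>k | k dvd n. ?T k) = 0 \<longleftrightarrow> (\<forall>k. k dvd n \<and> g_fun r s k (n div k) \<noteq> 0 \<longrightarrow> B k = \<beta> k)" .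
  show "(\<Sum>m | m dvd n. real m powr s / real (totient m) powr r * A m)
               = (\<Sum>m | m dvd n. real m powr s / real (totient m) powr r * \<alpha> m)
             \<longleftrightarrow> (\<forall>k. k dvd n \<and> g_fun r s k (n div k) \<noteq> 0 \<longrightarrow> B k = \<beta> k)"
    unfolding eq_iff_diff_eq_0[of "\<Sum>m | m dvd n. real m powr s / real (totient m) powr r * A m"] diff by (rule fin2)
qed

end
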